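(* Let $G$ be a simple graph with $n$ vertices and independence number $\alpha(G)$. Then the multiplicity of $1$ as a root of $P(\mathcal{H}_{\bullet G},\lambda)$ equals $n-\alpha(G)$.
   Context: A hypergraph $\mathcal{H}=(\mathcal{V},\mathcal{E})$ consists of a finite vertex set $\mathcal{V}$ and a set $\mathcal{E}$ of subsets of $\mathcal{V}$, each of size at least $1$, called edges. For a positive integer $\lambda$, a weak proper $\lambda$-colouring of $\mathcal{H}$ is a map $\phi:\mathcal{V}\to\{1,\dots,\lambda\}$ such that $|\{\phi(v):v\in e\}|>1$ for every $e\in\mathcal{E}$. $P(\mathcal{H},\lambda)$ denotes the number of weak proper $\lambda$-colourings of $\mathcal{H}$; it is a polynomial in $\lambda$ of degree $|\mathcal{V}|$. For a simple graph $G=(V,E)$, $\mathcal{H}_{\bullet G}$ is the hypergraph with vertex set $V\cup\{w\}$, where $w\notin V$ is a new vertex, and edge set $\{\{u,v,w\}: uv\in E\}$. *)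

theory Defs
  imports "HOL-Library.FuncSet" "HOL-Computational_Algebra.Polynomial"
begin

type_synonym 'a hypergraph = "'a set \<times> 'a set set"

definition weak_colourings :: "'a hypergraph \<Rightarrow> nat \<Rightarrow> ('a \<Rightarrow> nat) set" where
  "weak_colourings H lam =
     {phi \<in> fst H \<rightarrow>\<^sub>E {1..lam}. \<forall>e \<in> snd H. card (phi ` e) > 1}"

definition num_weak_colourings :: "'a hypergraph \<Rightarrow> nat \<Rightarrow> nat" where
  "num_weak_colourings H lam = card (weak_colourings H lam)"

definition chrom_poly :: "'a hypergraph \<Rightarrow> real poly" where
  "chrom_poly H = (THE p. \<forall>lam::nat. lam \<ge> 1 \<longrightarrow>
                      poly p (real lam) = real (num_weak_colourings H lam))"

definition simple_graph :: "'a set \<Rightarrow> 'a set set \<Rightarrow> bool" where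
  "simple_graph V E \<longleftrightarrow> finite V \<and> (\<forall>e \<in> E. e \<subseteq> V \<and> card e = 2)"

definition independent_set :: "'a set \<Rightarrow> 'a set set \<Rightarrow> 'a set \<Rightarrow> bool" where
  "independent_set V E S \<longleftrightarrow> S \<subseteq> V \<and> (\<forall>e \<in> E. \<not> e \<subseteq> S)"

definition independence_number :: "'a set \<Rightarrow> 'a set set \<Rightarrow> nat" where
  "independence_number V E = Max (card ` {S. independent_set V E S})"

text \<open>H_{\<bullet>G}: vertex set V plus a new vertex w (= None), edges {u,v,w} for uv in E.\<close>
definition cone_hypergraph :: "'a set \<Rightarrow> 'a set set \<Rightarrow> 'a option hypergraph" where
  "cone_hypergraph V E =
     (insert None (Some ` V), {insert None (Some ` e) | e. e \<in> E})"

end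

theory Submission
  imports Defs
begin

lemma cone_count:
  fixes V :: "'a set" and E :: "'a set set"
  assumes sg: "simple_graph V E" and lam: "lam \<ge> 1"
  shows "real (num_weak_colourings (cone_hypergraph V E) lam) =
         real lam * (\<Sum>S\<in>{S. independent_set V E S}. (real lam - 1) ^ (card V - card S))"
proof -
  define D where "D = insert None (Some ` V)"
  define IS where "IS = {S. independent_set V E S}"
  define F where "F = (\<lambda>(c::nat) (S::'a set) x. case x of None \<Rightarrow> {c}
                     | Some v \<Rightarrow> if v \<in> S then {c} else {1..lam} - {c})"
  have finV: "finite V" using sg by (simp add: simple_graph_def)
  have finD: "finite D" using finV by (simp add: D_def)
  have finIS: "finite IS"
    by (rule finite_subset[of _ "Pow V"]) (auto simp: IS_def independent_set_def finV)
  have Esub: "\<And>e. e \<in> E \<Longrightarrow> e \<subseteq> V \<and> card e = 2" using sg by (simp add: simple_graph_def)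
  have eq: "weak_colourings (cone_hypergraph V E) lam = (\<Union>(c,S)\<in>{1..lam}\<times>IS. PiE D (F c S))"
  proof (intro equalityI subsetI)
    fix phi assume ph: "phi \<in> weak_colourings (cone_hypergraph V E) lam"
    hence pi: "phi \<in> D \<rightarrow>\<^sub>E {1..lam}"
      and ed: "\<And>e. e \<in> E \<Longrightarrow> card (phi ` insert None (Some ` e)) > 1"
      by (auto simp: weak_colourings_def cone_hypergraph_def D_def simp del: image_insert)
    define c where "c = phi None"
    define S where "S = {v\<in>V. phi (Some v) = c}"
    have c: "c \<in> {1..lam}" using pi by (auto simp: c_def D_def)
    have S: "S \<in> IS"
      unfolding IS_def independent_set_def
    proof (intro CollectI conjI ballI)
      show "S \<subseteq> V" by (auto simp: S_def)
    next
      fix e assume e: "e \<in> E"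
      show "\<not> e \<subseteq> S"
      proof
        assume "e \<subseteq> S"
        hence "phi ` insert None (Some ` e) = {c}" by (auto simp: S_def c_def)
        hence "card (phi ` insert None (Some ` e)) = 1" by (simp only: card.empty card_insert_disjoint finite.emptyI empty_iff not_False_eq_True)
        with ed[OF e] show False by linarith
      qed
    qed
    have "phi \<in> PiE D (F c S)"
      using pi by (auto simp: PiE_iff F_def D_def S_def c_def)
    with c S show "phi \<in> (\<Union>(c,S)\<in>{1..lam}\<times>IS. PiE D (F c S))" by blast
  next
    fix phi assume "phi \<in> (\<Union>(c,S)\<in>{1..lam}\<times>IS. PiE D (F c S))"
    then obtain c S where c: "c \<in> {1..lam}" and S: "S \<in> IS" and ph: "phi \<in> PiE D (F c S)"
      by blast
    have pi: "phi \<in> D \<rightarrow>\<^sub>E {1..lam}"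
    proof -
      have "F c S x \<subseteq> {1..lam}" for x using c by (auto simp: F_def split: option.splits)
      thus ?thesis using ph unfolding PiE_iff by blast
    qed
    have "card (phi ` e') > 1" if e': "e' \<in> snd (cone_hypergraph V E)" for e'
    proof -
      obtain e where e: "e \<in> E" and e'e: "e' = insert None (Some ` e)"
        using e' by (auto simp: cone_hypergraph_def)
      have "\<not> e \<subseteq> S" using S e by (auto simp: IS_def independent_set_def)
      then obtain v where v: "v \<in> e" "v \<notin> S" by blast
      have vV: "v \<in> V" using Esub[OF e] v by auto
      have "phi (Some v) \<in> {1..lam} - {c}" using ph vV v by (auto simp: PiE_iff F_def D_def)
      moreover have "phi None = c" using ph by (auto simp: PiE_iff F_def D_def)
      ultimately have "card {phi None, phi (Some v)} = 2" by auto
      moreover have "{phi None, phi (Some v)} \<subseteq> phi ` e'" using v e'e by auto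
      moreover have "finite (phi ` e')"
        using e'e Esub[OF e] by (metis card.infinite finite.insertI finite_imageI zero_neq_numeral)
      ultimately show ?thesis by (metis card_mono one_less_numeral_iff semiring_norm(76) order_less_le_trans)
    qed
    with pi show "phi \<in> weak_colourings (cone_hypergraph V E) lam"
      by (auto simp: weak_colourings_def cone_hypergraph_def D_def)
  qed
  have disj: "\<forall>i\<in>{1..lam}\<times>IS. \<forall>j\<in>{1..lam}\<times>IS. i \<noteq> j \<longrightarrow>
      (case i of (c,S) \<Rightarrow> PiE D (F c S)) \<inter> (case j of (c,S) \<Rightarrow> PiE D (F c S)) = {}"
  proof (intro ballI impI)
    fix i j assume i: "i \<in> {1..lam}\<times>IS" and j: "j \<in> {1..lam}\<times>IS" and ij: "i \<noteq> j"
    obtain c S where iS: "i = (c,S)" by (cases i)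
    obtain c' S' where jS: "j = (c',S')" by (cases j)
    have S: "S \<in> IS" and S': "S' \<in> IS" and ne: "(c, S) \<noteq> (c', S')"
      using i j ij iS jS by auto
    show "(case i of (c,S) \<Rightarrow> PiE D (F c S)) \<inter> (case j of (c,S) \<Rightarrow> PiE D (F c S)) = {}"
    proof (rule ccontr)
    assume "(case i of (c,S) \<Rightarrow> PiE D (F c S)) \<inter> (case j of (c,S) \<Rightarrow> PiE D (F c S)) \<noteq> {}"
    then obtain phi where p1: "phi \<in> PiE D (F c S)" and p2: "phi \<in> PiE D (F c' S')"
      using iS jS by auto
    have "phi None = c" "phi None = c'" using p1 p2 by (auto simp: PiE_iff F_def D_def)
    hence cc: "c = c'" by simp
    with ne have "S \<noteq> S'" by simp
    moreover have "S \<subseteq> V" "S' \<subseteq> V" using S S' by (auto simp: IS_def independent_set_def)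
    ultimately obtain v where v: "v \<in> V" "(v \<in> S) \<noteq> (v \<in> S')" by blast
    have "phi (Some v) \<in> F c S (Some v)" "phi (Some v) \<in> F c' S' (Some v)"
      using p1 p2 v by (auto simp: PiE_iff D_def)
    with v cc show False by (auto simp: F_def split: if_splits)
    qed
  qed
  have cardF: "card (PiE D (F c S)) = (lam - 1) ^ (card V - card S)" if S: "S \<in> IS" and c: "c \<in> {1..lam}" for c S
  proof -
    have SV: "S \<subseteq> V" using S by (auto simp: IS_def independent_set_def)
    have "card (PiE D (F c S)) = (\<Prod>x\<in>D. card (F c S x))" by (rule card_PiE[OF finD])
    also have "\<dots> = (\<Prod>x\<in>Some ` V. card (F c S x))"
      by (simp add: D_def F_def prod.insert finV)
    also have "\<dots> = (\<Prod>v\<in>V. if v \<in> S then 1 else lam - 1)"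
    proof -
      have "(\<Prod>x\<in>Some ` V. card (F c S x)) = (\<Prod>v\<in>V. card (F c S (Some v)))"
        by (simp add: prod.reindex)
      also have "\<dots> = (\<Prod>v\<in>V. if v \<in> S then 1 else lam - 1)"
      proof (rule prod.cong[OF refl])
        fix v assume "v \<in> V"
        show "card (F c S (Some v)) = (if v \<in> S then 1 else lam - 1)"
          using c by (simp add: F_def)
      qed
      finally show ?thesis .
    qed
    also have "\<dots> = (lam - 1) ^ card (V - S)"
      by (simp add: prod.If_cases finV Diff_eq)
    also have "card (V - S) = card V - card S" using SV finV by (simp add: card_Diff_subset finite_subset)
    finally show ?thesis .
  qed
  have "real (num_weak_colourings (cone_hypergraph V E) lam)
      = real (\<Sum>(c,S)\<in>{1..lam}\<times>IS. card (PiE D (F c S)))"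
  proof -
    have fF: "\<forall>i\<in>{1..lam}\<times>IS. finite (case i of (c,S) \<Rightarrow> PiE D (F c S))"
    proof
      fix i assume "i \<in> {1..lam}\<times>IS"
      obtain c S where "i = (c,S)" by (cases i)
      moreover have "finite (F c S x)" for x by (simp add: F_def split: option.splits)
      ultimately show "finite (case i of (c,S) \<Rightarrow> PiE D (F c S))"
        using finD by (simp add: finite_PiE)
    qed
    have fI: "finite ({1..lam}\<times>IS)" using finIS by simp
    show ?thesis unfolding num_weak_colourings_def eq using card_UN_disjoint[OF fI fF disj] by (simp only: case_prod_unfold)
  qed
  also have "\<dots> = (\<Sum>c\<in>{1..lam}. \<Sum>S\<in>IS. real ((lam - 1) ^ (card V - card S)))"
    unfolding sum.cartesian_product[symmetric] of_nat_sum
    by (intro sum.cong refl) (simp add: cardF)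
  also have "\<dots> = real lam * (\<Sum>S\<in>IS. (real lam - 1) ^ (card V - card S))"
    using lam by (simp add: of_nat_diff)
  finally show ?thesis by (simp add: IS_def)
qed

lemma poly_unique_nat:
  fixes p q :: "real poly"
  assumes "\<And>lam::nat. lam \<ge> 1 \<Longrightarrow> poly p (real lam) = poly q (real lam)"
  shows "p = q"
proof (rule ccontr)
  assume "p \<noteq> q"
  hence "p - q \<noteq> 0" by simp
  hence fin: "finite {x. poly (p - q) x = 0}" by (rule poly_roots_finite)
  have "range (\<lambda>k::nat. real (Suc k)) \<subseteq> {x. poly (p - q) x = 0}"
  proof
    fix x assume "x \<in> range (\<lambda>k::nat. real (Suc k))"
    then obtain k where "x = real (Suc k)" by blast
    thus "x \<in> {x. poly (p - q) x = 0}" using assms[of "Suc k"] by simp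
  qed
  moreover have "infinite (range (\<lambda>k::nat. real (Suc k)))"
    by (rule range_inj_infinite) (simp add: inj_def)
  ultimately show False using fin finite_subset by blast
qed

theorem mainTheorem2:
  fixes V :: "'a set" and E :: "'a set set"
  assumes "simple_graph V E"
  shows "order 1 (chrom_poly (cone_hypergraph V E)) = card V - independence_number V E"
proof -
  define IS where "IS = {S. independent_set V E S}"
  define n where "n = card V"
  define a where "a = independence_number V E"
  define m where "m = n - a"
  define q :: "real poly" where "q = (\<Sum>S\<in>IS. [:-1,1:]^(n - card S))"
  define r :: "real poly" where "r = (\<Sum>S\<in>IS. [:-1,1:]^(a - card S))"
  define p :: "real poly" where "p = [:0,1:] * q"
  have finV: "finite V" using assms by (simp add: simple_graph_def)
  have finIS: "finite IS"
    by (rule finite_subset[of _ "Pow V"]) (auto simp: IS_def independent_set_def finV)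
  have emp: "{} \<in> IS" using assms
    by (auto simp: IS_def independent_set_def simple_graph_def)
  have a_def': "a = Max (card ` IS)" by (simp add: a_def independence_number_def IS_def)
  obtain S0 where S0: "S0 \<in> IS" "card S0 = a"
  proof -
    have "a \<in> card ` IS" unfolding a_def' using finIS emp by (intro Max_in) auto
    thus ?thesis using that by auto
  qed
  have le_a: "card S \<le> a" if "S \<in> IS" for S
    using that finIS a_def' by simp
  have a_le: "a \<le> n"
    using S0 finV by (auto simp: IS_def independent_set_def n_def intro: card_mono)
  have pp: "poly p (real lam) = real (num_weak_colourings (cone_hypergraph V E) lam)"
    if "lam \<ge> 1" for lam :: nat
    using cone_count[OF assms that]
    by (simp add: p_def q_def poly_sum IS_def n_def)
  have cp: "chrom_poly (cone_hypergraph V E) = p"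
    unfolding chrom_poly_def
  proof (rule the_equality)
    show "\<forall>lam::nat. lam \<ge> 1 \<longrightarrow> poly p (real lam) = real (num_weak_colourings (cone_hypergraph V E) lam)"
      using pp by blast
  next
    fix p' assume "\<forall>lam::nat. lam \<ge> 1 \<longrightarrow> poly p' (real lam) = real (num_weak_colourings (cone_hypergraph V E) lam)"
    thus "p' = p" using pp by (intro poly_unique_nat) auto
  qed
  have qr: "q = [:-1,1:]^m * r"
    unfolding q_def r_def sum_distrib_left
  proof (rule sum.cong[OF refl])
    fix S assume "S \<in> IS"
    hence "n - card S = m + (a - card S)" using le_a a_le by (simp add: m_def)
    thus "[:-1,1:]^(n - card S) = ([:-1,1:]^m * [:-1,1:]^(a - card S) :: real poly)"
      by (simp add: power_add)
  qed
  have "poly r 1 \<ge> 1"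
  proof -
    have "poly r 1 = (\<Sum>S\<in>IS. (0::real)^(a - card S))" by (simp add: r_def poly_sum)
    also have "\<dots> \<ge> (0::real)^(a - card S0)"
      by (rule member_le_sum[OF S0(1)]) (auto simp: finIS)
    finally show ?thesis using S0 by simp
  qed
  hence r0: "poly r 1 \<noteq> 0" by linarith
  hence rnz: "r \<noteq> 0" by auto
  have ordr: "order 1 r = 0" by (rule order_0I[OF r0])
  have ord1: "order 1 [:0,1::real:] = 0" by (rule order_0I) simp
  have ordm: "order 1 ([:-1,1:]^m :: real poly) = m"
    using order_power_n_n[of "1::real" m] by simp
  have nz: "[:0,1::real:] * ([:-1,1:]^m * r) \<noteq> 0" using rnz by simp
  have "order 1 p = order 1 [:0,1::real:] + order 1 ([:-1,1:]^m * r)"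
    unfolding p_def qr by (rule order_mult[OF nz])
  also have "order 1 ([:-1,1:]^m * r) = order 1 ([:-1,1:]^m :: real poly) + order 1 r"
    by (rule order_mult) (use nz in auto)
  finally show ?thesis using ord1 ordm ordr cp by (simp add: m_def n_def a_def)
qed

end
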